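(* Let $n\geq 2$ and consider the clustered graph of overlapping $n$-permutations. For every cluster $X$ there exists a unique cluster $Y$ such that there are exactly two (parallel) edges from $X$ to $Y$. Moreover, there are no clusters $X,Y$ with three or more edges from $X$ to $Y$.
   Context: An $n$-permutation is a permutation $\pi_1\cdots\pi_n$ of $\{1,\ldots,n\}$. For a word $w$ of distinct numbers, $\mathrm{red}(w)$ is the permutation obtained by replacing the $i$-th smallest letter by $i$. For an $(n-1)$-permutation $\tau$, the cluster with signature $\tau$ is the set of all $n$-permutations $\pi$ with $\mathrm{red}(\pi_1\cdots\pi_{n-1})=\tau$. The clustered graph of overlapping $n$-permutations is the directed multigraph (loops allowed) whose vertices are the $(n-1)!$ clusters and in which every $n$-permutation $\pi$ contributes exactly one edge, going from the cluster containing $\pi$ to the cluster with signature $\mathrm{red}(\pi_2\cdots\pi_n)$. *)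

theory Defs
  imports Main
begin

definition perms :: "nat \<Rightarrow> nat list set" where
  "perms n = {xs. distinct xs \<and> set xs = {1..n}}"

definition red :: "nat list \<Rightarrow> nat list" where
  "red w = map (\<lambda>x. card {y \<in> set w. y \<le> x}) w"

text \<open>Clusters are identified with their signatures tau, i.e. elements of perms (n-1);
  the cluster with signature tau is the set of n-permutations pi with red(pi_1..pi_{n-1}) = tau.\<close>
definition cluster :: "nat \<Rightarrow> nat list \<Rightarrow> nat list set" where
  "cluster n tau = {pi \<in> perms n. red (butlast pi) = tau}"

text \<open>Number of edges of the clustered graph from the cluster with signature X to the
  cluster with signature Y: each n-permutation pi gives one edge from its cluster to the
  cluster with signature red(pi_2..pi_n).\<close>
definition num_edges :: "nat \<Rightarrow> nat list \<Rightarrow> nat list \<Rightarrow> nat" where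
  "num_edges n X Y = card {pi \<in> perms n. pi \<in> cluster n X \<and> red (tl pi) = Y}"

end

theory Submission
  imports Defs
begin

definition sh :: "nat \<Rightarrow> nat \<Rightarrow> nat" where
  "sh k x = (if k \<le> x then x + 1 else x)"

definition ins :: "nat list \<Rightarrow> nat \<Rightarrow> nat list" where
  "ins X k = map (sh k) X @ [k]"

lemma card_le_lt:
  fixes S :: "nat set"
  assumes "finite S" "a \<in> S" "b \<in> S"
  shows "(card {y\<in>S. y \<le> a} < card {y\<in>S. y \<le> b}) \<longleftrightarrow> a < b"
proof
  assume "a < b"
  then have "{y\<in>S. y \<le> a} \<subseteq> {y\<in>S. y \<le> b}" "b \<notin> {y\<in>S. y \<le> a}" "b \<in> {y\<in>S. y \<le> b}" using assms by auto
  then have "{y\<in>S. y \<le> a} \<subset> {y\<in>S. y \<le> b}" by blast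
  then show "card {y\<in>S. y \<le> a} < card {y\<in>S. y \<le> b}"
    using assms by (intro psubset_card_mono) auto
next
  assume h: "card {y\<in>S. y \<le> a} < card {y\<in>S. y \<le> b}"
  show "a < b"
  proof (rule ccontr)
    assume "\<not> a < b"
    then have "{y\<in>S. y \<le> b} \<subseteq> {y\<in>S. y \<le> a}" by auto
    then have "card {y\<in>S. y \<le> b} \<le> card {y\<in>S. y \<le> a}"
      using assms by (intro card_mono) auto
    then show False using h by simp
  qed
qed

lemma red_length[simp]: "length (red w) = length w"
  by (simp add: red_def)

lemma red_nth: "i < length w \<Longrightarrow> red w ! i = card {y \<in> set w. y \<le> w ! i}"
  by (simp add: red_def)

lemma red_lt:
  assumes "i < length w" "j < length w"
  shows "(red w ! i < red w ! j) \<longleftrightarrow> (w ! i < w ! j)"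
  using assms by (simp add: red_nth card_le_lt)

lemma perm_of_sub:
  assumes "distinct w" "set w \<subseteq> {1..length w}"
  shows "w \<in> perms (length w)"
proof -
  have "card (set w) = length w" using assms(1) by (simp add: distinct_card)
  then have "set w = {1..length w}" using assms(2)
    by (intro card_subset_eq) auto
  then show ?thesis using assms(1) by (simp add: perms_def)
qed

lemma red_perm:
  assumes "w \<in> perms m"
  shows "red w = w"
proof -
  have sw: "set w = {1..m}" and d: "distinct w" using assms by (auto simp: perms_def)
  have "\<forall>x\<in>set w. card {y \<in> set w. y \<le> x} = x"
  proof
    fix x assume "x \<in> set w"
    then have "x \<le> m" "1 \<le> x" using sw by auto
    then have "{y \<in> set w. y \<le> x} = {1..x}" using sw by auto
    then show "card {y \<in> set w. y \<le> x} = x" by simp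
  qed
  then show ?thesis unfolding red_def by (simp add: map_idI)
qed

lemma red_in_perms:
  assumes "distinct w"
  shows "red w \<in> perms (length w)"
proof -
  have "distinct (red w)"
  proof (subst distinct_conv_nth, intro allI impI)
    fix i j assume ij: "i < length (red w)" "j < length (red w)" "i \<noteq> j"
    then have "w ! i \<noteq> w ! j" using assms by (simp add: nth_eq_iff_index_eq)
    then have "w ! i < w ! j \<or> w ! j < w ! i" by arith
    then show "red w ! i \<noteq> red w ! j" using red_lt[of i w j] red_lt[of j w i] ij by auto
  qed
  moreover have "set (red w) \<subseteq> {1..length w}"
  proof
    fix z assume "z \<in> set (red w)"
    then obtain x where x: "x \<in> set w" "z = card {y \<in> set w. y \<le> x}"
      by (auto simp: red_def)
    have "x \<in> {y \<in> set w. y \<le> x}" using x by simp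
    then have "{y \<in> set w. y \<le> x} \<noteq> {}" by blast
    then have "1 \<le> z" using x(2) by (simp add: Suc_le_eq card_gt_0_iff)
    moreover have "z \<le> card (set w)" using x by (auto intro: card_mono)
    ultimately show "z \<in> {1..length w}" using assms by (simp add: distinct_card)
  qed
  ultimately show ?thesis using perm_of_sub[of "red w"] by simp
qed

lemma red_map:
  assumes "\<forall>x\<in>set w. \<forall>y\<in>set w. (g y \<le> g x) \<longleftrightarrow> (y \<le> x)"
  shows "red (map g w) = red w"
proof -
  have inj: "inj_on g (set w)"
    by (rule inj_onI) (metis assms order_antisym order_refl)
  have "\<forall>x\<in>set w. card {z \<in> g ` set w. z \<le> g x} = card {y \<in> set w. y \<le> x}"
  proof
    fix x assume x: "x \<in> set w"
    have "{z \<in> g ` set w. z \<le> g x} = g ` {y \<in> set w. y \<le> x}" using assms x by auto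
    moreover have "inj_on g {y \<in> set w. y \<le> x}" using inj by (rule inj_on_subset) auto
    ultimately show "card {z \<in> g ` set w. z \<le> g x} = card {y \<in> set w. y \<le> x}"
      by (simp add: card_image)
  qed
  then show ?thesis unfolding red_def by simp
qed

lemma ins_perms:
  assumes "X \<in> perms m" "k \<in> {1..Suc m}"
  shows "ins X k \<in> perms (Suc m)"
proof -
  have sX: "set X = {1..m}" and d: "distinct X" using assms by (auto simp: perms_def)
  have len: "length X = m" using sX d distinct_card by fastforce
  have "inj_on (sh k) (set X)" by (rule inj_onI) (auto simp: sh_def split: if_splits)
  then have "distinct (ins X k)" using d
    by (auto simp: ins_def distinct_map sh_def split: if_splits)
  moreover have "set (ins X k) \<subseteq> {1..length (ins X k)}"
    using sX assms(2) len by (auto simp: ins_def sh_def)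
  ultimately show ?thesis using perm_of_sub[of "ins X k"] len by (simp add: ins_def)
qed

lemma cluster_char:
  assumes "X \<in> perms m"
  shows "cluster (Suc m) X = ins X ` {1..Suc m}"
proof
  show "ins X ` {1..Suc m} \<subseteq> cluster (Suc m) X"
  proof
    fix p assume "p \<in> ins X ` {1..Suc m}"
    then obtain k where k: "k \<in> {1..Suc m}" "p = ins X k" by auto
    have "red (butlast p) = red (map (sh k) X)" using k by (simp add: ins_def)
    also have "\<dots> = red X" by (rule red_map) (auto simp: sh_def)
    also have "\<dots> = X" using red_perm assms by blast
    finally show "p \<in> cluster (Suc m) X"
      using ins_perms[OF assms k(1)] k by (simp add: cluster_def)
  qed
next
  show "cluster (Suc m) X \<subseteq> ins X ` {1..Suc m}"
  proof
    fix p assume p: "p \<in> cluster (Suc m) X"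
    then have sp: "set p = {1..Suc m}" and dp: "distinct p" and rX: "red (butlast p) = X"
      by (auto simp: cluster_def perms_def)
    have lp: "length p = Suc m" using sp dp distinct_card by fastforce
    then have "p \<noteq> []" by auto
    define k where "k = last p"
    define bp where "bp = butlast p"
    have pe: "p = bp @ [k]" using \<open>p \<noteq> []\<close> by (simp add: k_def bp_def)
    have kin: "k \<in> {1..Suc m}" using sp \<open>p \<noteq> []\<close> k_def last_in_set by blast
    have kn: "k \<notin> set bp" and dbp: "distinct bp" using dp pe by auto
    have sbp: "set bp \<subseteq> {1..Suc m}" using sp pe by auto
    have lbp: "length bp = m" using lp pe by simp
    define g where "g y = (if y < k then y else y - 1)" for y
    have ord: "\<forall>x\<in>set bp. \<forall>y\<in>set bp. (g y \<le> g x) \<longleftrightarrow> (y \<le> x)"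
    proof (intro ballI)
      fix x y assume "x \<in> set bp" "y \<in> set bp"
      then have "x \<noteq> k" "y \<noteq> k" using kn by auto
      then show "(g y \<le> g x) \<longleftrightarrow> (y \<le> x)" by (auto simp: g_def)
    qed
    have "inj_on g (set bp)"
      by (rule inj_onI) (metis ord order_antisym order_refl)
    then have dg: "distinct (map g bp)" using dbp by (simp add: distinct_map)
    have "set (map g bp) \<subseteq> {1..length (map g bp)}"
    proof
      fix z assume "z \<in> set (map g bp)"
      then obtain y where y: "y \<in> set bp" "z = g y" by auto
      then have "y \<noteq> k" "y \<in> {1..Suc m}" using kn sbp by auto
      then show "z \<in> {1..length (map g bp)}" using y(2) kin lbp by (auto simp: g_def)
    qed
    then have "map g bp \<in> perms (length (map g bp))" using perm_of_sub dg by blast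
    then have "map g bp = red (map g bp)" using red_perm by metis
    also have "\<dots> = red bp" using red_map[OF ord] .
    also have "\<dots> = X" using rX bp_def by simp
    finally have gX: "map g bp = X" .
    have "map (sh k) (map g bp) = bp" unfolding map_map
    proof (rule map_idI)
      fix y assume "y \<in> set bp"
      then have "y \<noteq> k" "y \<in> {1..Suc m}" using kn sbp by auto
      then show "(sh k \<circ> g) y = y" using kin by (auto simp: g_def sh_def)
    qed
    then have "p = ins X k" using pe gX by (simp add: ins_def)
    then show "p \<in> ins X ` {1..Suc m}" using kin by blast
  qed
qed

lemma f_eq:
  assumes "X \<in> perms m" "m \<ge> 1"
  shows "red (tl (ins X (hd X))) = red (tl (ins X (hd X + 1)))"
proof -
  have sX: "set X = {1..m}" and d: "distinct X" using assms by (auto simp: perms_def)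
  have "X \<noteq> []" using sX assms(2) by auto
  then obtain a T where X: "X = a # T" by (cases X) auto
  have aT: "a \<notin> set T" using d X by simp
  define U where "U = map (sh a) T"
  have U2: "map (sh (a+1)) T = U" unfolding U_def
  proof (rule map_cong[OF refl])
    fix x assume "x \<in> set T"
    then have "x \<noteq> a" using aT by auto
    then show "sh (a + 1) x = sh a x" by (auto simp: sh_def)
  qed
  have aU: "a \<notin> set U" "a + 1 \<notin> set U" using aT unfolding U_def by (auto simp: sh_def)
  define g where "g y = (if y = a then a + 1 else y)" for y
  have "red (map g (U @ [a])) = red (U @ [a])"
  proof (rule red_map, intro ballI)
    fix x y assume "x \<in> set (U @ [a])" "y \<in> set (U @ [a])"
    then have "x \<noteq> a + 1" "y \<noteq> a + 1" using aU by auto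
    then show "(g y \<le> g x) \<longleftrightarrow> (y \<le> x)" by (auto simp: g_def)
  qed
  moreover have "map g U = U"
  proof (rule map_idI)
    fix y assume "y \<in> set U"
    then have "y \<noteq> a" using aU by auto
    then show "g y = y" by (simp add: g_def)
  qed
  then have "map g (U @ [a]) = U @ [a + 1]" by (simp add: g_def)
  ultimately have "red (U @ [a]) = red (U @ [a + 1])" by metis
  moreover have "tl (ins X (hd X)) = U @ [a]" using X by (simp add: ins_def U_def)
  moreover have "tl (ins X (hd X + 1)) = U @ [a + 1]" using X U2 by (simp add: ins_def)
  ultimately show ?thesis by metis
qed

lemma f_inj:
  assumes "X \<in> perms m" "m \<ge> 1" "k \<in> {1..Suc m}" "k' \<in> {1..Suc m}" "k < k'"
    and eq: "red (tl (ins X k)) = red (tl (ins X k'))"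
  shows "k = hd X \<and> k' = hd X + 1"
proof -
  have sX: "set X = {1..m}" and d: "distinct X" using assms(1) by (auto simp: perms_def)
  have "X \<noteq> []" using sX assms(2) by auto
  then obtain a T where X: "X = a # T" by (cases X) auto
  have sT: "set T = {1..m} - {a}" using sX d X by auto
  define w where "w = map (sh k) T @ [k]"
  define v where "v = map (sh k') T @ [k']"
  have wv: "red w = red v" using eq X by (simp add: ins_def w_def v_def)
  have key: "(x < k) \<longleftrightarrow> (x < k')" if x: "x \<in> set T" for x
  proof -
    obtain i where i: "i < length T" "T ! i = x" using x by (meson in_set_conv_nth)
    have lw: "length w = Suc (length T)" "length v = Suc (length T)"
      by (simp_all add: w_def v_def)
    have e1: "(red w ! i < red w ! length T) \<longleftrightarrow> (w ! i < w ! length T)"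
      using red_lt[of i w "length T"] i lw by simp
    have e2: "(red v ! i < red v ! length T) \<longleftrightarrow> (v ! i < v ! length T)"
      using red_lt[of i v "length T"] i lw by simp
    have e3: "w ! i = sh k x" "w ! length T = k" "v ! i = sh k' x" "v ! length T = k'"
      using i unfolding w_def v_def by (simp_all add: nth_append)
    have "(red w ! i < red w ! length T) \<longleftrightarrow> (red v ! i < red v ! length T)"
      using wv by simp
    then have "(sh k x < k) \<longleftrightarrow> (sh k' x < k')" using e1 e2 e3 by simp
    then show ?thesis by (auto simp: sh_def split: if_splits)
  qed
  have "k \<le> m" using assms(4,5) by auto
  have k1: "k = a"
  proof (rule ccontr)
    assume "k \<noteq> a"
    then have "k \<in> set T" using sT assms(3) \<open>k \<le> m\<close> by auto
    then show False using key[of k] assms(5) by simp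
  qed
  have k2: "k' - 1 = a"
  proof (rule ccontr)
    assume "k' - 1 \<noteq> a"
    moreover have "1 \<le> k" "k < k'" "k' \<le> Suc m" using assms(3,4,5) by simp_all
    then have "1 \<le> k' - 1" "k' - 1 \<le> m" by arith+
    ultimately have "k' - 1 \<in> set T" using sT by simp
    then show False using key[of "k' - 1"] assms(5) by simp
  qed
  show ?thesis using k1 k2 X assms(5) by simp
qed

theorem lemma2:
  fixes n :: nat
  assumes "n \<ge> 2"
  shows "(\<forall>X \<in> perms (n - 1). \<exists>!Y. Y \<in> perms (n - 1) \<and> num_edges n X Y = 2)
       \<and> (\<forall>X \<in> perms (n - 1). \<forall>Y \<in> perms (n - 1). num_edges n X Y < 3)"
proof -
  define m where "m = n - 1"
  have n: "n = Suc m" and m1: "m \<ge> 1" using assms unfolding m_def by arith+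
  have main: "\<exists>!Y. Y \<in> perms m \<and> num_edges n X Y = 2"
    "\<forall>Y. num_edges n X Y < 3" if X: "X \<in> perms m" for X
  proof -
    define f where "f k = red (tl (ins X k))" for k
    define K where "K Y = {k \<in> {1..Suc m}. f k = Y}" for Y
    have injI: "inj_on (ins X) A" for A
      by (rule inj_onI) (metis ins_def last_snoc)
    have ne: "num_edges n X Y = card (K Y)" for Y
    proof -
      have "{p \<in> perms n. p \<in> cluster n X \<and> red (tl p) = Y}
          = {p \<in> cluster n X. red (tl p) = Y}" by (auto simp: cluster_def)
      also have "\<dots> = {p \<in> ins X ` {1..Suc m}. red (tl p) = Y}"
        using cluster_char[OF X] n by simp
      also have "\<dots> = ins X ` K Y" unfolding K_def f_def by blast
      finally have "{p \<in> perms n. p \<in> cluster n X \<and> red (tl p) = Y} = ins X ` K Y" .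
      then show ?thesis unfolding num_edges_def using injI by (simp add: card_image)
    qed
    define a where "a = hd X"
    have sX: "set X = {1..m}" using X by (simp add: perms_def)
    have "X \<noteq> []" using sX m1 by auto
    then have ain: "a \<in> {1..m}" using sX a_def hd_in_set by blast
    have fa: "f a = f (a + 1)" using f_eq[OF X m1] by (simp add: f_def a_def)
    have pair: "k = a \<and> k' = a + 1" if "k \<in> {1..Suc m}" "k' \<in> {1..Suc m}" "k < k'" "f k = f k'"
      for k k' using f_inj[OF X m1 that(1,2,3)] that(4) by (simp add: f_def a_def)
    have shape: "K Y \<subseteq> {a, a + 1} \<or> (\<exists>k. K Y \<subseteq> {k})" for Y
    proof (cases "K Y \<subseteq> {a, a + 1}")
      case False
      then obtain k where k: "k \<in> K Y" "k \<noteq> a" "k \<noteq> a + 1" by auto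
      have "K Y \<subseteq> {k}"
      proof
        fix k' assume k': "k' \<in> K Y"
        show "k' \<in> {k}"
        proof (rule ccontr)
          assume "k' \<notin> {k}"
          then have "k < k' \<or> k' < k" by auto
          then show False using pair[of k k'] pair[of k' k] k k' by (auto simp: K_def)
        qed
      qed
      then show ?thesis by blast
    qed simp
    have cle: "card (K Y) \<le> 2" for Y
    proof -
      from shape[of Y] show ?thesis
      proof
        assume "K Y \<subseteq> {a, a + 1}"
        then have "card (K Y) \<le> card {a, a+1}" by (intro card_mono) auto
        then show ?thesis by simp
      next
        assume "\<exists>k. K Y \<subseteq> {k}"
        then obtain k where "K Y \<subseteq> {k}" by blast
        then have "card (K Y) \<le> card {k}" by (intro card_mono) auto
        then show ?thesis by simp
      qed
    qed
    show "\<forall>Y. num_edges n X Y < 3"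
    proof
      fix Y have "card (K Y) \<le> 2" by (rule cle)
      then show "num_edges n X Y < 3" using ne[of Y] by linarith
    qed
    have c2: "Y = f a" if "card (K Y) = 2" for Y
    proof -
      from shape[of Y] show ?thesis
      proof
        assume "\<exists>k. K Y \<subseteq> {k}"
        then obtain k where "K Y \<subseteq> {k}" by blast
        then have "card (K Y) \<le> card {k}" by (intro card_mono) auto
        then show ?thesis using that by simp
      next
        assume sub: "K Y \<subseteq> {a, a + 1}"
        have "card (K Y) = card {a, a+1}" using that by simp
        then have "K Y = {a, a+1}" using sub card_subset_eq[of "{a, a+1}" "K Y"] by blast
        then have "a \<in> K Y" by blast
        then show ?thesis unfolding K_def by simp
      qed
    qed
    have ka: "{a, a + 1} \<subseteq> K (f a)" using ain fa by (auto simp: K_def)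
    have "card {a, a+1} \<le> card (K (f a))" using ka by (intro card_mono) (auto simp: K_def)
    then have "card (K (f a)) = 2" using cle[of "f a"] by simp
    moreover have "f a \<in> perms m"
    proof -
      have "ins X a \<in> perms (Suc m)" using ins_perms[OF X] ain by auto
      then have dd: "distinct (ins X a)" and ss: "set (ins X a) = {1..Suc m}"
        by (simp_all add: perms_def)
      then have "length (ins X a) = Suc m" using distinct_card by fastforce
      then have "distinct (tl (ins X a))" "length (tl (ins X a)) = m"
        using dd by (simp_all add: distinct_tl)
      then show ?thesis using red_in_perms unfolding f_def by metis
    qed
    ultimately show "\<exists>!Y. Y \<in> perms m \<and> num_edges n X Y = 2"
      using c2 ne by metis
  qed
  show ?thesis using main n by simp
qed

end
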